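(* Consider a population model with two biallelic causal variants (alleles $A_1,A_2$ and $B_1,B_2$) and a biallelic marker (alleles $M_1,M_2$), with ordered genotypes, in which the marker is in linkage disequilibrium with the first causal variant and in linkage equilibrium with the second causal variant. Let $\pi\in(0,1)$ be the probability that a random individual is a case, and let $\pi_{kl}$ be the probability of being a case given ordered genotype $(A_k,A_l)$ at the first causal variant, with $\pi_{12}=\pi_{21}$. Then for all $i,j\in\{1,2\}$, \[ \mathrm{P}(M_i M_j \mid A) \;=\; q_{ij} + D_{11ij}\frac{\pi_{11}-\pi_{12}}{\pi} + D_{22ij}\frac{\pi_{22}-\pi_{12}}{\pi}, \qquad \mathrm{P}(M_i M_j \mid U) \;=\; q_{ij} + D_{11ij}\frac{\pi_{12}-\pi_{11}}{1-\pi} + D_{22ij}\frac{\pi_{12}-\pi_{22}}{1-\pi}, \] where $D_{ijkl}=\mathrm{P}(A_iA_jM_kM_l)-\mathrm{P}(A_iA_j)\mathrm{P}(M_kM_l)$. Moreover, if Hardy–Weinberg equilibrium holds, then also $D_{ijkl}=\mathrm{P}(A_iM_k)\mathrm{P}(A_jM_l)-p_ip_jq_kq_l$.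
   Context: A random individual is drawn from a population. Each individual carries two ordered haplotypes (first and second), and at each of three loci (first causal variant with alleles $A_1,A_2$; second causal variant with alleles $B_1,B_2$; marker with alleles $M_1,M_2$) has an ordered genotype. The individual is either a case (event $A$, affected) or a control (event $U$, unaffected). $\mathrm{P}(A_kA_l)=p_{kl}$ is the probability of ordered genotype $(A_k,A_l)$ at the first causal variant, $\mathrm{P}(M_iM_j)=q_{ij}$ the probability of ordered marker genotype $(M_i,M_j)$, $p_i$ and $q_k$ the population frequencies of alleles $A_i$ and $M_k$, and $\mathrm{P}(A_iA_jM_kM_l)$ the probability that the individual has haplotypes $(A_i,M_k)$ (first) and $(A_j,M_l)$ (second); $\mathrm{P}(A_iM_k)$ denotes the population frequency of the haplotype $(A_i,M_k)$. $\mathrm{P}(M_iM_j\mid A)$ and $\mathrm{P}(M_iM_j\mid U)$ are the probabilities of marker genotype $(M_i,M_j)$ among cases and among controls. The marker is not causal: given the genotypes at the two causal variants, the case/control status is independent of the marker genotype. Linkage equilibrium of the marker with the second causal variant means that, given the genotype at the first causal variant, the marker genotype is independent of the genotype at the second causal variant. Hardy–Weinberg equilibrium means that the two haplotypes of an individual are independent, i.e. $\mathrm{P}(A_iA_jM_kM_l)=\mathrm{P}(A_iM_k)\mathrm{P}(A_jM_l)$ (so in particular $\mathrm{P}(A_iA_j)=p_ip_j$ and $q_{kl}=q_kq_l$). *)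

theory Defs
  imports "HOL-Probability.Probability_Mass_Function"
begin

text \<open>An ordered genotype is a pair (allele on first haplotype, allele on second haplotype);
alleles are indexed 1 and 2.\<close>

type_synonym geno = "nat \<times> nat"
type_synonym indiv = "geno \<times> geno \<times> geno \<times> bool"

definition genos :: "geno set" where
  "genos = {1,2} \<times> {1,2}"

definition gA :: "indiv \<Rightarrow> geno" where "gA w = fst w"
definition gB :: "indiv \<Rightarrow> geno" where "gB w = fst (snd w)"
definition gM :: "indiv \<Rightarrow> geno" where "gM w = fst (snd (snd w))"
definition affected :: "indiv \<Rightarrow> bool" where "affected w = snd (snd (snd w))"

definition Pr :: "indiv pmf \<Rightarrow> indiv set \<Rightarrow> real" where
  "Pr p E = measure_pmf.prob p E"

text \<open>Conditional probability P(E | F) (= 0 by the HOL division convention if P(F) = 0).\<close>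
definition cprob :: "indiv pmf \<Rightarrow> indiv set \<Rightarrow> indiv set \<Rightarrow> real" where
  "cprob p E F = Pr p (E \<inter> F) / Pr p F"

definition evA :: "geno \<Rightarrow> indiv set" where "evA g = {w. gA w = g}"
definition evB :: "geno \<Rightarrow> indiv set" where "evB g = {w. gB w = g}"
definition evM :: "geno \<Rightarrow> indiv set" where "evM g = {w. gM w = g}"
definition Case :: "indiv set" where "Case = {w. affected w}"
definition Ctrl :: "indiv set" where "Ctrl = {w. \<not> affected w}"

definition qG :: "indiv pmf \<Rightarrow> nat \<Rightarrow> nat \<Rightarrow> real" where
  "qG p i j = Pr p (evM (i,j))"
definition pG :: "indiv pmf \<Rightarrow> nat \<Rightarrow> nat \<Rightarrow> real" where
  "pG p i j = Pr p (evA (i,j))"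
definition PAM :: "indiv pmf \<Rightarrow> nat \<Rightarrow> nat \<Rightarrow> nat \<Rightarrow> nat \<Rightarrow> real" where
  "PAM p i j k l = Pr p (evA (i,j) \<inter> evM (k,l))"
definition Dlt :: "indiv pmf \<Rightarrow> nat \<Rightarrow> nat \<Rightarrow> nat \<Rightarrow> nat \<Rightarrow> real" where
  "Dlt p i j k l = PAM p i j k l - pG p i j * qG p k l"

definition piC :: "indiv pmf \<Rightarrow> real" where "piC p = Pr p Case"
definition piG :: "indiv pmf \<Rightarrow> nat \<Rightarrow> nat \<Rightarrow> real" where
  "piG p k l = cprob p Case (evA (k,l))"

definition alleleA :: "indiv pmf \<Rightarrow> nat \<Rightarrow> real" where
  "alleleA p i = (Pr p {w. fst (gA w) = i} + Pr p {w. snd (gA w) = i}) / 2"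
definition alleleM :: "indiv pmf \<Rightarrow> nat \<Rightarrow> real" where
  "alleleM p k = (Pr p {w. fst (gM w) = k} + Pr p {w. snd (gM w) = k}) / 2"
definition hapAM :: "indiv pmf \<Rightarrow> nat \<Rightarrow> nat \<Rightarrow> real" where
  "hapAM p i k = (Pr p {w. fst (gA w) = i \<and> fst (gM w) = k}
                 + Pr p {w. snd (gA w) = i \<and> snd (gM w) = k}) / 2"

text \<open>Hardy-Weinberg equilibrium: the two haplotypes of an individual are independent.\<close>
definition HWE :: "indiv pmf \<Rightarrow> bool" where
  "HWE p \<longleftrightarrow> (\<forall>i\<in>{1,2}. \<forall>j\<in>{1,2}. \<forall>k\<in>{1,2}. \<forall>l\<in>{1,2}.
      PAM p i j k l = hapAM p i k * hapAM p j l)"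

definition marker_noncausal :: "indiv pmf \<Rightarrow> bool" where
  "marker_noncausal p \<longleftrightarrow> (\<forall>a\<in>genos. \<forall>b\<in>genos. \<forall>m\<in>genos.
      cprob p (Case \<inter> evM m) (evA a \<inter> evB b)
        = cprob p Case (evA a \<inter> evB b) * cprob p (evM m) (evA a \<inter> evB b))"

definition LE_marker_B :: "indiv pmf \<Rightarrow> bool" where
  "LE_marker_B p \<longleftrightarrow> (\<forall>a\<in>genos. \<forall>b\<in>genos. \<forall>m\<in>genos.
      cprob p (evM m \<inter> evB b) (evA a)
        = cprob p (evM m) (evA a) * cprob p (evB b) (evA a))"

end

theory Submission
  imports Defs
begin

lemma Pr_split:
  assumes fin: "finite S" and sup: "\<forall>w\<in>set_pmf p. f w \<in> S"
  shows "Pr p E = (\<Sum>g\<in>S. Pr p (E \<inter> {w. f w = g}))"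
proof -
  have "Pr p E = Pr p (E \<inter> set_pmf p)" unfolding Pr_def by (simp add: measure_Int_set_pmf)
  also have "E \<inter> set_pmf p = (\<Union>g\<in>S. E \<inter> {w. f w = g} \<inter> set_pmf p)" using sup by auto
  also have "Pr p \<dots> = (\<Sum>g\<in>S. Pr p (E \<inter> {w. f w = g} \<inter> set_pmf p))"
    unfolding Pr_def
    by (rule measure_pmf.finite_measure_finite_Union) (auto simp: fin disjoint_family_on_def)
  also have "\<dots> = (\<Sum>g\<in>S. Pr p (E \<inter> {w. f w = g}))" unfolding Pr_def by (simp add: measure_Int_set_pmf)
  finally show ?thesis .
qed

lemma Pr_mono: "E \<subseteq> F \<Longrightarrow> Pr p E \<le> Pr p F"
  unfolding Pr_def by (simp add: measure_pmf.finite_measure_mono)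

lemma Pr_nn: "Pr p E \<ge> 0" unfolding Pr_def by simp

lemma Pr_zero: "E \<subseteq> F \<Longrightarrow> Pr p F = 0 \<Longrightarrow> Pr p E = 0"
  using Pr_mono Pr_nn by (metis antisym)

lemma Pr_UNIV: "Pr p UNIV = 1" unfolding Pr_def by simp

lemma genos_sum: "(\<Sum>g\<in>genos. f g) = f (1,1) + f (1,2) + f (2,1) + f (2,2)"
  unfolding genos_def by (simp add: add.assoc)

lemma finite_genos: "finite genos" unfolding genos_def by simp

lemma alg1:
  fixes X Y Z Q R W :: real
  assumes "Q = 0 \<Longrightarrow> X = 0" "Q = 0 \<Longrightarrow> Y = 0" "R = 0 \<Longrightarrow> Q = 0"
    "X / Q = Y / Q * (Z / Q)" "Z / R = W / R * (Q / R)"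
  shows "X * R = Y * W"
proof (cases "Q = 0")
  case True then show ?thesis using assms by simp
next
  case False
  then have R: "R \<noteq> 0" using assms by auto
  from assms(4) False have "X = Y * Z / Q" by (simp add: field_simps power2_eq_square)
  moreover from assms(5) R have "Z = W * Q / R" by (simp add: field_simps power2_eq_square)
  ultimately show ?thesis using False R by (simp add: field_simps)
qed

lemma core:
  fixes p :: "indiv pmf"
  assumes biallelic: "set_pmf p \<subseteq> genos \<times> genos \<times> genos \<times> UNIV"
    and noncausal: "marker_noncausal p"
    and LE: "LE_marker_B p"
    and a: "a \<in> genos" and m: "m \<in> genos"
  shows "Pr p (Case \<inter> evM m \<inter> evA a) = piG p (fst a) (snd a) * PAM p (fst a) (snd a) (fst m) (snd m)"
proof -
  have suppB: "\<forall>w\<in>set_pmf p. gB w \<in> genos" using biallelic by (auto simp: gB_def)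
  have step: "Pr p (Case \<inter> evM m \<inter> evA a \<inter> evB b) * Pr p (evA a)
      = Pr p (Case \<inter> evA a \<inter> evB b) * Pr p (evM m \<inter> evA a)" if b: "b \<in> genos" for b
  proof -
    have n: "cprob p (Case \<inter> evM m) (evA a \<inter> evB b)
        = cprob p Case (evA a \<inter> evB b) * cprob p (evM m) (evA a \<inter> evB b)"
      using noncausal a b m unfolding marker_noncausal_def by blast
    have l: "cprob p (evM m \<inter> evB b) (evA a)
        = cprob p (evM m) (evA a) * cprob p (evB b) (evA a)"
      using LE a b m unfolding LE_marker_B_def by blast
    have e1: "Case \<inter> evM m \<inter> (evA a \<inter> evB b) = Case \<inter> evM m \<inter> evA a \<inter> evB b" by blast
    have e2: "Case \<inter> (evA a \<inter> evB b) = Case \<inter> evA a \<inter> evB b" by blast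
    have e3: "evM m \<inter> evB b \<inter> evA a = evM m \<inter> (evA a \<inter> evB b)" by blast
    have e4: "evB b \<inter> evA a = evA a \<inter> evB b" by blast
    show ?thesis
      apply (rule alg1[where Q = "Pr p (evA a \<inter> evB b)" and Z = "Pr p (evM m \<inter> (evA a \<inter> evB b))"])
      using n l unfolding cprob_def e1 e2 e3 e4
      by (auto intro: Pr_zero)
  qed
  have "Pr p (Case \<inter> evM m \<inter> evA a) * Pr p (evA a)
      = (\<Sum>b\<in>genos. Pr p (Case \<inter> evM m \<inter> evA a \<inter> evB b)) * Pr p (evA a)"
    by (subst Pr_split[OF _ suppB]) (auto simp: genos_def evB_def)
  also have "\<dots> = (\<Sum>b\<in>genos. Pr p (Case \<inter> evA a \<inter> evB b)) * Pr p (evM m \<inter> evA a)"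
    by (simp add: sum_distrib_right step)
  also have "(\<Sum>b\<in>genos. Pr p (Case \<inter> evA a \<inter> evB b)) = Pr p (Case \<inter> evA a)"
    by (subst Pr_split[OF _ suppB]) (auto simp: genos_def evB_def)
  finally have eq: "Pr p (Case \<inter> evM m \<inter> evA a) * Pr p (evA a) = Pr p (Case \<inter> evA a) * Pr p (evM m \<inter> evA a)" .
  have ea: "evA (fst a, snd a) = evA a" "evM (fst m, snd m) = evM m" by auto
  show ?thesis
  proof (cases "Pr p (evA a) = 0")
    case True
    have "Pr p (Case \<inter> evM m \<inter> evA a) = 0" by (rule Pr_zero[OF _ True]) auto
    moreover have "Pr p (evA a \<inter> evM m) = 0" by (rule Pr_zero[OF _ True]) auto
    ultimately show ?thesis unfolding PAM_def ea by simp
  next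
    case False
    then show ?thesis using eq unfolding PAM_def piG_def cprob_def ea
      by (simp add: field_simps Int_commute)
  qed
qed


lemma alg2:
  fixes P11 P12 P21 P22 p11 p12 p21 p22 a b c d q S pc :: real
  assumes "S = a * P11 + b * P12 + c * P21 + d * P22"
    "pc = a * p11 + b * p12 + c * p21 + d * p22"
    "q = P11 + P12 + P21 + P22" "p11 + p12 + p21 + p22 = 1" "b = c"
  shows "S = q * pc + (P11 - p11 * q) * (a - b) + (P22 - p22 * q) * (d - b)"
proof -
  have "S - (q * pc + (P11 - p11 * q) * (a - b) + (P22 - p22 * q) * (d - b))
      = b * q * (1 - (p11 + p12 + p21 + p22))"
    using assms(1,2,3,5) by (simp add: algebra_simps)
  then show ?thesis using assms(4) by simp
qed

theorem lemma1:
  fixes p :: "indiv pmf"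
  assumes biallelic: "set_pmf p \<subseteq> genos \<times> genos \<times> genos \<times> UNIV"
    and noncausal: "marker_noncausal p"
    and LE: "LE_marker_B p"
    and pi_pos: "0 < piC p" and pi_lt1: "piC p < 1"
    and sym: "piG p 1 2 = piG p 2 1"
  shows "(\<forall>i\<in>{1,2}. \<forall>j\<in>{1,2}.
            cprob p (evM (i,j)) Case
              = qG p i j + Dlt p 1 1 i j * (piG p 1 1 - piG p 1 2) / piC p
                         + Dlt p 2 2 i j * (piG p 2 2 - piG p 1 2) / piC p
          \<and> cprob p (evM (i,j)) Ctrl
              = qG p i j + Dlt p 1 1 i j * (piG p 1 2 - piG p 1 1) / (1 - piC p)
                         + Dlt p 2 2 i j * (piG p 1 2 - piG p 2 2) / (1 - piC p))
       \<and> (HWE p \<longrightarrow> (\<forall>i\<in>{1,2}. \<forall>j\<in>{1,2}. \<forall>k\<in>{1,2}. \<forall>l\<in>{1,2}.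
            Dlt p i j k l = hapAM p i k * hapAM p j l
                            - alleleA p i * alleleA p j * alleleM p k * alleleM p l))"
proof -
  have suppA: "\<forall>w\<in>set_pmf p. gA w \<in> genos" using biallelic by (auto simp: gA_def)
  have suppM: "\<forall>w\<in>set_pmf p. gM w \<in> genos" using biallelic by (auto simp: gM_def)
  have suppAf: "\<forall>w\<in>set_pmf p. fst (gA w) \<in> {1,2}" "\<forall>w\<in>set_pmf p. snd (gA w) \<in> {1,2}"
    using biallelic by (auto simp: gA_def genos_def)
  have suppMf: "\<forall>w\<in>set_pmf p. fst (gM w) \<in> {1,2}" "\<forall>w\<in>set_pmf p. snd (gM w) \<in> {1,2}"
    using biallelic by (auto simp: gM_def genos_def)
  have finite_bool: "finite (UNIV :: bool set)" by simp
  have suppC: "\<forall>w\<in>set_pmf p. affected w \<in> UNIV" by simp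
  have UNIV_bool': "(UNIV :: bool set) = {True, False}" by auto
  have caseA: "Pr p (Case \<inter> evA a) = piG p (fst a) (snd a) * pG p (fst a) (snd a)" for a
  proof (cases "Pr p (evA a) = 0")
    case True
    have "Pr p (Case \<inter> evA a) = 0" by (rule Pr_zero[OF _ True]) auto
    then show ?thesis using True by (simp add: pG_def)
  next
    case False then show ?thesis by (simp add: pG_def piG_def cprob_def)
  qed
  have sumpG: "pG p 1 1 + pG p 1 2 + pG p 2 1 + pG p 2 2 = 1"
    using Pr_split[OF finite_genos suppA, of UNIV] by (simp add: Pr_UNIV genos_sum pG_def evA_def)
  have piC_eq: "piC p = piG p 1 1 * pG p 1 1 + piG p 1 2 * pG p 1 2 + piG p 2 1 * pG p 2 1 + piG p 2 2 * pG p 2 2"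
    unfolding piC_def using Pr_split[OF finite_genos suppA, of Case] caseA by (simp add: genos_sum evA_def[symmetric])
  have Ctrl_eq: "Pr p Ctrl = 1 - piC p"
    using Pr_split[OF finite_bool suppC, of UNIV] by (simp add: UNIV_bool' Pr_UNIV piC_def Case_def Ctrl_def)
  have part1: "\<forall>i\<in>{1,2}. \<forall>j\<in>{1,2}.
            cprob p (evM (i,j)) Case
              = qG p i j + Dlt p 1 1 i j * (piG p 1 1 - piG p 1 2) / piC p
                         + Dlt p 2 2 i j * (piG p 2 2 - piG p 1 2) / piC p
          \<and> cprob p (evM (i,j)) Ctrl
              = qG p i j + Dlt p 1 1 i j * (piG p 1 2 - piG p 1 1) / (1 - piC p)
                         + Dlt p 2 2 i j * (piG p 1 2 - piG p 2 2) / (1 - piC p)"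
  proof (intro ballI)
  fix i j :: nat assume i: "i \<in> {1,2}" and j: "j \<in> {1,2}"
  have m: "(i,j) \<in> genos" using i j by (auto simp: genos_def)
  have MA: "Pr p (evM (i,j) \<inter> Case) = piG p 1 1 * PAM p 1 1 i j + piG p 1 2 * PAM p 1 2 i j
      + piG p 2 1 * PAM p 2 1 i j + piG p 2 2 * PAM p 2 2 i j"
  proof -
    have "Pr p (evM (i,j) \<inter> Case) = (\<Sum>a\<in>genos. Pr p (Case \<inter> evM (i,j) \<inter> evA a))"
      by (subst Pr_split[OF finite_genos suppA]) (auto simp: genos_def evA_def Int_ac)
    also have "\<dots> = (\<Sum>a\<in>genos. piG p (fst a) (snd a) * PAM p (fst a) (snd a) i j)"
      by (rule sum.cong) (use core[OF biallelic noncausal LE _ m] in auto)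
    finally show ?thesis by (simp add: genos_sum)
  qed
  have qsum: "qG p i j = PAM p 1 1 i j + PAM p 1 2 i j + PAM p 2 1 i j + PAM p 2 2 i j"
    unfolding qG_def PAM_def
    by (subst Pr_split[OF finite_genos suppA]) (auto simp: genos_sum evA_def Int_ac)
  have MU: "Pr p (evM (i,j) \<inter> Ctrl) = qG p i j - Pr p (evM (i,j) \<inter> Case)"
    unfolding qG_def
    using Pr_split[OF finite_bool suppC, of "evM (i,j)"] by (simp add: UNIV_bool' Case_def Ctrl_def)
  have key: "Pr p (evM (i,j) \<inter> Case) = qG p i j * piC p + Dlt p 1 1 i j * (piG p 1 1 - piG p 1 2)
      + Dlt p 2 2 i j * (piG p 2 2 - piG p 1 2)"
    unfolding Dlt_def by (rule alg2[OF MA piC_eq qsum sumpG sym])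
  have pc1: "1 - piC p \<noteq> 0" using pi_lt1 by simp
  have c1: "cprob p (evM (i,j)) Case
              = qG p i j + Dlt p 1 1 i j * (piG p 1 1 - piG p 1 2) / piC p
                         + Dlt p 2 2 i j * (piG p 2 2 - piG p 1 2) / piC p"
  proof -
    have pcn: "piC p \<noteq> 0" using pi_pos by simp
    have "cprob p (evM (i,j)) Case = Pr p (evM (i,j) \<inter> Case) / piC p"
      unfolding cprob_def piC_def ..
    also have "\<dots> = (qG p i j * piC p + Dlt p 1 1 i j * (piG p 1 1 - piG p 1 2)
      + Dlt p 2 2 i j * (piG p 2 2 - piG p 1 2)) / piC p" using key by simp
    also have "\<dots> = qG p i j + Dlt p 1 1 i j * (piG p 1 1 - piG p 1 2) / piC p
                         + Dlt p 2 2 i j * (piG p 2 2 - piG p 1 2) / piC p"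
      using pcn by (simp add: add_divide_distrib)
    finally show ?thesis .
  qed
  have c2: "cprob p (evM (i,j)) Ctrl
              = qG p i j + Dlt p 1 1 i j * (piG p 1 2 - piG p 1 1) / (1 - piC p)
                         + Dlt p 2 2 i j * (piG p 1 2 - piG p 2 2) / (1 - piC p)"
  proof -
    have "cprob p (evM (i,j)) Ctrl = (qG p i j * (1 - piC p) + Dlt p 1 1 i j * (piG p 1 2 - piG p 1 1)
      + Dlt p 2 2 i j * (piG p 1 2 - piG p 2 2)) / (1 - piC p)"
      unfolding cprob_def Ctrl_eq MU key by (simp add: algebra_simps)
    also have "\<dots> = qG p i j + Dlt p 1 1 i j * (piG p 1 2 - piG p 1 1) / (1 - piC p)
                         + Dlt p 2 2 i j * (piG p 1 2 - piG p 2 2) / (1 - piC p)"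
      using pc1 by (simp add: add_divide_distrib)
    finally show ?thesis .
  qed
  show "cprob p (evM (i,j)) Case
              = qG p i j + Dlt p 1 1 i j * (piG p 1 1 - piG p 1 2) / piC p
                         + Dlt p 2 2 i j * (piG p 2 2 - piG p 1 2) / piC p
          \<and> cprob p (evM (i,j)) Ctrl
              = qG p i j + Dlt p 1 1 i j * (piG p 1 2 - piG p 1 1) / (1 - piC p)
                         + Dlt p 2 2 i j * (piG p 1 2 - piG p 2 2) / (1 - piC p)"
    using c1 c2 by blast
  qed
  have hA: "hapAM p x 1 + hapAM p x 2 = alleleA p x" for x
  proof -
    have "Pr p {w. fst (gA w) = x} = Pr p {w. fst (gA w) = x \<and> fst (gM w) = 1} + Pr p {w. fst (gA w) = x \<and> fst (gM w) = 2}"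
      by (subst Pr_split[OF _ suppMf(1)]) (auto simp: Collect_conj_eq)
    moreover have "Pr p {w. snd (gA w) = x} = Pr p {w. snd (gA w) = x \<and> snd (gM w) = 1} + Pr p {w. snd (gA w) = x \<and> snd (gM w) = 2}"
      by (subst Pr_split[OF _ suppMf(2)]) (auto simp: Collect_conj_eq)
    ultimately show ?thesis unfolding hapAM_def alleleA_def by (simp add: field_simps)
  qed
  have hM: "hapAM p 1 x + hapAM p 2 x = alleleM p x" for x
  proof -
    have "Pr p {w. fst (gM w) = x} = Pr p {w. fst (gA w) = 1 \<and> fst (gM w) = x} + Pr p {w. fst (gA w) = 2 \<and> fst (gM w) = x}"
      by (subst Pr_split[OF _ suppAf(1)]) (auto simp: Collect_conj_eq Int_ac)
    moreover have "Pr p {w. snd (gM w) = x} = Pr p {w. snd (gA w) = 1 \<and> snd (gM w) = x} + Pr p {w. snd (gA w) = 2 \<and> snd (gM w) = x}"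
      by (subst Pr_split[OF _ suppAf(2)]) (auto simp: Collect_conj_eq Int_ac)
    ultimately show ?thesis unfolding hapAM_def alleleM_def by (simp add: field_simps)
  qed
  have part2: "HWE p \<longrightarrow> (\<forall>i\<in>{1,2}. \<forall>j\<in>{1,2}. \<forall>k\<in>{1,2}. \<forall>l\<in>{1,2}.
            Dlt p i j k l = hapAM p i k * hapAM p j l
                            - alleleA p i * alleleA p j * alleleM p k * alleleM p l)"
  proof (intro impI ballI)
    fix i j k l :: nat assume H: "HWE p" and i: "i \<in> {1,2}" and j: "j \<in> {1,2}"
      and k: "k \<in> {1,2}" and l: "l \<in> {1,2}"
    have P: "PAM p a b c d = hapAM p a c * hapAM p b d" if "a \<in> {1,2}" "b \<in> {1,2}" "c \<in> {1,2}" "d \<in> {1,2}" for a b c d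
      using H that unfolding HWE_def by blast
    have "pG p i j = PAM p i j 1 1 + PAM p i j 1 2 + PAM p i j 2 1 + PAM p i j 2 2"
      unfolding pG_def PAM_def
      by (subst Pr_split[OF finite_genos suppM]) (auto simp: genos_sum evM_def)
    also have "\<dots> = (hapAM p i 1 + hapAM p i 2) * (hapAM p j 1 + hapAM p j 2)"
      using i j by (simp add: P algebra_simps)
    finally have pg: "pG p i j = alleleA p i * alleleA p j" by (simp only: hA)
    have "qG p k l = PAM p 1 1 k l + PAM p 1 2 k l + PAM p 2 1 k l + PAM p 2 2 k l"
      unfolding qG_def PAM_def
      by (subst Pr_split[OF finite_genos suppA]) (auto simp: genos_sum evA_def Int_ac)
    also have "\<dots> = (hapAM p 1 k + hapAM p 2 k) * (hapAM p 1 l + hapAM p 2 l)"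
      using k l by (simp add: P algebra_simps)
    finally have qg: "qG p k l = alleleM p k * alleleM p l" by (simp only: hM)
    show "Dlt p i j k l = hapAM p i k * hapAM p j l
                            - alleleA p i * alleleA p j * alleleM p k * alleleM p l"
      unfolding Dlt_def pg qg using P[OF i j k l] by (simp add: algebra_simps)
  qed
  show ?thesis using part1 part2 by blast
qed

end
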